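(* Let $n\ge4$ be even. Let $G$ have node set $V_1\cup V_2\cup\{v\}$ with $|V_1|=n/2$, $|V_2|=n/2-1$ (disjoint, not containing $v$), and edge set $\{(x,y):x\in V_1,\ y\in V_2\cup\{v\}\}$. Consider the \textsc{Random Pick} process on $G$ from the initial state in which only $v$ is colored. Then with probability $1-o(1)$ as $n\to\infty$, the convergence time exceeds $\frac18 n\log_2 n$. (Here $\Delta_+(G)=n/2$ and $D(G)=1$.)
   Context: A state is a map $V\to\{b,r,u\}$ (blue, red, uncolored); colored means blue or red. \textsc{Random Pick} process: in each round $t$ every node $x$ with at least one out-neighbor picks an out-neighbor $ps_t(x)$ uniformly at random, independently; an uncolored node adopts the color of its pick if the pick is colored, and all other nodes keep their color. A state is stable if no uncolored node has a colored out-neighbor; the convergence time is the first round $t\ge0$ at which the state is stable. *)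

theory Defs
  imports "HOL-Probability.Probability"
begin

datatype color = Blue | Red | Uncolored

type_synonym 'a state = "'a \<Rightarrow> color"

definition colored :: "color \<Rightarrow> bool" where
  "colored c \<longleftrightarrow> c \<noteq> Uncolored"

definition out_nbrs :: "('a \<times> 'a) set \<Rightarrow> 'a \<Rightarrow> 'a set" where
  "out_nbrs E x = {y. (x, y) \<in> E}"

definition rp_step :: "'a set \<Rightarrow> ('a \<times> 'a) set \<Rightarrow> 'a state \<Rightarrow> 'a state pmf" where
  "rp_step V E s =
     map_pmf (\<lambda>pick x. if x \<in> V \<and> out_nbrs E x \<noteq> {} \<and> s x = Uncolored \<and> colored (s (pick x))
                       then s (pick x) else s x)
       (Pi_pmf {x \<in> V. out_nbrs E x \<noteq> {}} undefined (\<lambda>x. pmf_of_set (out_nbrs E x)))"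

definition stable :: "'a set \<Rightarrow> ('a \<times> 'a) set \<Rightarrow> 'a state \<Rightarrow> bool" where
  "stable V E s \<longleftrightarrow> (\<forall>x\<in>V. s x = Uncolored \<longrightarrow> (\<forall>y\<in>out_nbrs E x. \<not> colored (s y)))"

fun rp_traj :: "'a set \<Rightarrow> ('a \<times> 'a) set \<Rightarrow> 'a state \<Rightarrow> nat \<Rightarrow> 'a state list pmf" where
  "rp_traj V E s0 0 = return_pmf [s0]"
| "rp_traj V E s0 (Suc k) =
     bind_pmf (rp_traj V E s0 k) (\<lambda>xs. map_pmf (\<lambda>s'. xs @ [s']) (rp_step V E (last xs)))"

text \<open>Probability that the convergence time (first round t \<ge> 0 with a stable state)
  exceeds T, i.e. that no round t with t \<le> T is stable.\<close>
definition conv_time_exceeds_prob :: "'a set \<Rightarrow> ('a \<times> 'a) set \<Rightarrow> 'a state \<Rightarrow> real \<Rightarrow> real" where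
  "conv_time_exceeds_prob V E s0 T =
     measure_pmf.prob (rp_traj V E s0 (nat \<lfloor>T\<rfloor>))
       {xs. \<forall>t < length xs. real t \<le> T \<longrightarrow> \<not> stable V E (xs ! t)}"

end

theory Submission imports Defs "HOL-Analysis.Harmonic_Numbers" "HOL-Real_Asymp.Real_Asymp"
begin

locale rpg =
  fixes V1 V2 :: "'a set" and v :: 'a
  assumes fin1: "finite V1" and fin2: "finite V2" and disj: "V1 \<inter> V2 = {}"
    and v1: "v \<notin> V1" and v2: "v \<notin> V2"
begin

abbreviation "VV \<equiv> V1 \<union> V2 \<union> {v}"
abbreviation "EE \<equiv> {(x, y). x \<in> V1 \<and> y \<in> V2 \<union> {v}}"
abbreviation "PP \<equiv> Pi_pmf V1 undefined (\<lambda>_. pmf_of_set (V2 \<union> {v}))"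

definition Inv :: "'a state \<Rightarrow> bool" where
  "Inv s \<longleftrightarrow> colored (s v) \<and> (\<forall>y\<in>V2. s y = Uncolored)"
definition U :: "'a state \<Rightarrow> 'a set" where
  "U s = {x\<in>V1. s x = Uncolored}"
definition F :: "'a state \<Rightarrow> ('a \<Rightarrow> 'a) \<Rightarrow> 'a state" where
  "F s pick = (\<lambda>x. if x \<in> V1 \<and> s x = Uncolored \<and> colored (s (pick x)) then s (pick x) else s x)"

fun it :: "nat \<Rightarrow> 'a state \<Rightarrow> 'a state pmf" where
  "it 0 s = return_pmf s"
| "it (Suc k) s = bind_pmf (rp_step VV EE s) (it k)"

lemma out0[simp]: "out_nbrs (V1 \<times> {y. y = v \<or> y \<in> V2}) x = (if x \<in> V1 then insert v V2 else {})"
  by (auto simp: out_nbrs_def)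

lemma out: "out_nbrs EE x = (if x \<in> V1 then V2 \<union> {v} else {})"
  by (auto simp: out_nbrs_def)

lemma dom: "{x \<in> VV. out_nbrs EE x \<noteq> {}} = V1"
  by (auto simp: out)

lemma step_eq: "rp_step VV EE s = map_pmf (F s) PP"
proof -
  have "Pi_pmf V1 undefined (\<lambda>x. pmf_of_set (out_nbrs EE x)) = PP"
    by (rule Pi_pmf_cong) (auto simp: out)
  thus ?thesis unfolding rp_step_def dom F_def
    by (intro map_pmf_cong) (auto simp: out intro!: ext)
qed

lemma set_PP: "pick \<in> set_pmf PP \<Longrightarrow> x \<in> V1 \<Longrightarrow> pick x \<in> V2 \<union> {v}"
  using fin1 fin2 by (auto simp: set_Pi_pmf PiE_dflt_def)

lemma U_F: "Inv s \<Longrightarrow> pick \<in> set_pmf PP \<Longrightarrow> U (F s pick) = {x\<in>U s. pick x \<noteq> v}"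
proof -
  assume I: "Inv s" and p: "pick \<in> set_pmf PP"
  have key: "F s pick x = Uncolored \<longleftrightarrow> s x = Uncolored \<and> pick x \<noteq> v" if x: "x \<in> V1" for x
  proof -
    have px: "pick x \<in> V2 \<union> {v}" using set_PP[OF p x] .
    have "colored (s (pick x)) \<longleftrightarrow> pick x = v"
      using px I by (auto simp: Inv_def colored_def)
    then show ?thesis using x I by (auto simp: F_def Inv_def colored_def)
  qed
  show ?thesis unfolding U_def using key by auto
qed

lemma Inv_F: "Inv s \<Longrightarrow> Inv (F s pick)"
  using disj v1 v2 by (auto simp: F_def Inv_def)

lemma step_props: "Inv s \<Longrightarrow> s' \<in> set_pmf (rp_step VV EE s) \<Longrightarrow> Inv s' \<and> U s' \<subseteq> U s"
  unfolding step_eq using U_F Inv_F by auto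

lemma stable_iff: "Inv s \<Longrightarrow> stable VV EE s \<longleftrightarrow> U s = {}"
  by (auto simp: stable_def U_def Inv_def out)

lemma it_Suc': "it (Suc k) s = bind_pmf (it k s) (rp_step VV EE)"
proof (induction k arbitrary: s)
  case 0
  have "it 0 = return_pmf" by (rule ext) simp
  then show ?case by (simp add: bind_return_pmf bind_return_pmf')
next
  case (Suc k)
  have "it (Suc (Suc k)) s = bind_pmf (rp_step VV EE s) (it (Suc k))"
    by (simp only: it.simps)
  also have "\<dots> = bind_pmf (rp_step VV EE s) (\<lambda>s'. bind_pmf (it k s') (rp_step VV EE))"
    by (intro bind_pmf_cong refl Suc.IH)
  also have "\<dots> = bind_pmf (it (Suc k) s) (rp_step VV EE)" by (simp add: bind_assoc_pmf)
  finally show ?case .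
qed

lemma traj_last: "map_pmf last (rp_traj VV EE s0 k) = it k s0"
proof (induction k)
  case 0 then show ?case by simp
next
  case (Suc k)
  have "map_pmf last (rp_traj VV EE s0 (Suc k)) = bind_pmf (rp_traj VV EE s0 k) (\<lambda>xs. rp_step VV EE (last xs))"
    by (simp add: map_bind_pmf pmf.map_comp o_def)
  also have "\<dots> = bind_pmf (map_pmf last (rp_traj VV EE s0 k)) (rp_step VV EE)"
    by (simp add: bind_map_pmf)
  finally show ?case using Suc by (metis it_Suc')
qed

lemma traj_supp: "Inv s0 \<Longrightarrow> xs \<in> set_pmf (rp_traj VV EE s0 k) \<Longrightarrow>
   length xs = Suc k \<and> Inv (last xs) \<and> (\<forall>t<length xs. Inv (xs ! t)) \<and> (U (last xs) \<noteq> {} \<longrightarrow> (\<forall>t<length xs. U (xs ! t) \<noteq> {}))"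
proof (induction k arbitrary: xs)
  case 0 then show ?case by simp
next
  case (Suc k)
  then obtain ys s' where ys: "ys \<in> set_pmf (rp_traj VV EE s0 k)" and s': "s' \<in> set_pmf (rp_step VV EE (last ys))"
    and xs: "xs = ys @ [s']" by auto
  note IH = Suc.IH[OF Suc.prems(1) ys]
  have sp: "Inv s' \<and> U s' \<subseteq> U (last ys)" using step_props IH s' by blast
  show ?case
  proof (intro conjI impI allI)
    show "length xs = Suc (Suc k)" using IH xs by simp
    show "Inv (last xs)" using sp xs by simp
    fix t assume "t < length xs"
    then show "Inv (xs ! t)" using IH sp xs by (cases "t < length ys") (auto simp: nth_append)
  next
    fix t assume ne: "U (last xs) \<noteq> {}" and t: "t < length xs"
    show "U (xs ! t) \<noteq> {}"
    proof (cases "t < length ys")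
      case True
      then have "U (last ys) \<noteq> {}" using ne sp xs by auto
      then show ?thesis using IH True xs by (auto simp: nth_append)
    next
      case False then show ?thesis using t ne xs by (auto simp: nth_append)
    qed
  qed
qed

definition q :: real where "q = real (card V2) / (real (card V2) + 1)"

lemma q_bounds: "0 \<le> q" "q \<le> 1" by (auto simp: q_def)

lemma nn_pmf_of_set: "finite S \<Longrightarrow> S \<noteq> {} \<Longrightarrow> (\<And>y. h y \<ge> 0) \<Longrightarrow>
   (\<integral>\<^sup>+y. ennreal (h y) \<partial>pmf_of_set S) = ennreal (sum h S / card S)"
  by (simp add: nn_integral_pmf_of_set sum_ennreal ennreal_of_nat_eq_real_of_nat divide_ennreal
       sum_nonneg card_gt_0_iff)

lemma U_fin: "finite (U s)" using fin1 by (auto simp: U_def)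

lemma prob_it: "Inv s \<Longrightarrow> emeasure (it k s) {s'. U s' = {}} = ennreal ((1 - q^k) ^ card (U s))"
proof (induction k arbitrary: s)
  case 0
  then show ?case using U_fin[of s] by (cases "U s = {}") (auto simp: card_eq_0_iff)
next
  case (Suc k)
  define a where "a = 1 - q^k"
  have a0: "0 \<le> a" "a \<le> 1" using q_bounds by (auto simp: a_def power_le_one)
  define g where "g x y = (if x \<in> U s \<and> y \<noteq> v then a else 1)" for x y
  define b where "b = (1 + real (card V2) * a) / (real (card V2) + 1)"
  have g0: "g x y \<ge> 0" for x y using a0 by (auto simp: g_def)
  have "emeasure (it (Suc k) s) {s'. U s' = {}} = (\<integral>\<^sup>+s'. emeasure (it k s') {s'. U s' = {}} \<partial>rp_step VV EE s)"
    by simp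
  also have "\<dots> = (\<integral>\<^sup>+s'. ennreal (a ^ card (U s')) \<partial>rp_step VV EE s)"
    by (intro nn_integral_cong_AE AE_pmfI) (use Suc step_props in \<open>auto simp: a_def\<close>)
  also have "\<dots> = (\<integral>\<^sup>+pick. ennreal (a ^ card (U (F s pick))) \<partial>PP)"
    unfolding step_eq by simp
  also have "\<dots> = (\<integral>\<^sup>+pick. (\<Prod>x\<in>V1. ennreal (g x (pick x))) \<partial>PP)"
  proof (intro nn_integral_cong_AE AE_pmfI)
    fix pick assume p: "pick \<in> set_pmf PP"
    have "(\<Prod>x\<in>V1. g x (pick x)) = (\<Prod>x\<in>{x\<in>V1. x \<in> U s \<and> pick x \<noteq> v}. a)"
      using fin1 by (subst prod.inter_filter) (auto simp: g_def)
    also have "{x\<in>V1. x \<in> U s \<and> pick x \<noteq> v} = U (F s pick)"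
      using U_F[OF Suc.prems p] by (auto simp: U_def)
    finally have "a ^ card (U (F s pick)) = (\<Prod>x\<in>V1. g x (pick x))" by simp
    then show "ennreal (a ^ card (U (F s pick))) = (\<Prod>x\<in>V1. ennreal (g x (pick x)))"
      by (simp add: prod_ennreal g0)
  qed
  also have "\<dots> = (\<Prod>x\<in>V1. \<integral>\<^sup>+y. ennreal (g x y) \<partial>pmf_of_set (V2 \<union> {v}))"
    by (rule nn_integral_prod_Pi_pmf[OF fin1])
  also have "\<dots> = (\<Prod>x\<in>V1. ennreal (if x \<in> U s then b else 1))"
  proof (intro prod.cong refl)
    fix x assume x: "x \<in> V1"
    have "(\<integral>\<^sup>+y. ennreal (g x y) \<partial>pmf_of_set (V2 \<union> {v})) = ennreal (sum (g x) (V2 \<union> {v}) / card (V2 \<union> {v}))"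
      by (rule nn_pmf_of_set) (use fin2 g0 in auto)
    also have "sum (g x) (V2 \<union> {v}) / card (V2 \<union> {v}) = (if x \<in> U s then b else 1)"
    proof (cases "x \<in> U s")
      case True
      have "sum (g x) (V2 \<union> {v}) = g x v + sum (g x) V2"
        using fin2 v2 by (simp add: sum.insert_if)
      also have "sum (g x) V2 = sum (\<lambda>_. a) V2"
        using v2 True by (intro sum.cong) (auto simp: g_def)
      also have "g x v = 1" by (simp add: g_def)
      finally have "sum (g x) (V2 \<union> {v}) = 1 + real (card V2) * a" by simp
      moreover have "card (V2 \<union> {v}) = card V2 + 1" using fin2 v2 by simp
      ultimately show ?thesis using True by (simp add: b_def add.commute)
    next
      case False
      have "sum (g x) (V2 \<union> {v}) = sum (\<lambda>_. 1) (V2 \<union> {v})"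
        using False by (intro sum.cong) (auto simp: g_def)
      moreover have "card (V2 \<union> {v}) > 0" using fin2 by (simp add: card_gt_0_iff)
      ultimately show ?thesis using False by simp
    qed
    finally show "(\<integral>\<^sup>+y. ennreal (g x y) \<partial>pmf_of_set (V2 \<union> {v})) = ennreal (if x \<in> U s then b else 1)" .
  qed
  also have "\<dots> = ennreal (\<Prod>x\<in>V1. (if x \<in> U s then b else 1))"
  proof (rule prod_ennreal)
    have "0 \<le> b" using a0 by (simp add: b_def)
    then show "\<And>x. x \<in> V1 \<Longrightarrow> 0 \<le> (if x \<in> U s then b else 1)" by simp
  qed
  also have "(\<Prod>x\<in>V1. (if x \<in> U s then b else 1)) = (\<Prod>x\<in>{x\<in>V1. x \<in> U s}. b)"
    using fin1 by (rule prod.inter_filter[symmetric])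
  also have "{x\<in>V1. x \<in> U s} = U s" by (auto simp: U_def)
  also have "(\<Prod>x\<in>U s. b) = b ^ card (U s)" by simp
  also have "b = 1 - q ^ Suc k"
  proof -
    define c where "c = real (card V2)"
    define Q where "Q = q ^ k"
    have c0: "0 \<le> c" by (simp add: c_def)
    have "b = (1 + c * (1 - Q)) / (c + 1)" by (simp add: b_def a_def c_def Q_def)
    also have "\<dots> = 1 - c / (c + 1) * Q" using c0 by (simp add: field_simps)
    also have "c / (c + 1) * Q = q ^ Suc k" by (simp add: q_def c_def Q_def)
    finally show ?thesis .
  qed
  finally show ?case .
qed

end


lemma pw_x: fixes n :: nat assumes n: "4 \<le> n"
  shows "real n powr (-3/4) \<le> (1 - 2 / real n) ^ nat \<lfloor>real n * log 2 (real n) / 8\<rfloor>"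
proof -
  define r where "r = real n"
  have r4: "4 \<le> r" using n by (simp add: r_def)
  define T where "T = r * log 2 r / 8"
  have T0: "0 \<le> T" using r4 by (simp add: T_def)
  define K where "K = nat \<lfloor>T\<rfloor>"
  have KT: "real K \<le> T" using T0 by (simp add: K_def)
  define y where "y = 2 / r"
  have y0: "0 \<le> y" "y \<le> 1/2" using r4 by (auto simp: y_def)
  have ly: "ln (1 - y) \<ge> -2 * y"
  proof -
    have "- y - 2 * y\<^sup>2 \<le> ln (1 - y)" by (rule ln_one_minus_pos_lower_bound) (use y0 in auto)
    moreover have "y * (2 * y) \<le> y * 1" by (rule mult_left_mono) (use y0 in auto)
    then have "2 * y\<^sup>2 \<le> y" by (simp add: power2_eq_square)
    ultimately show ?thesis by linarith
  qed
  have lyneg: "ln (1 - y) \<le> 0" using y0 by simp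
  have pos: "0 < 1 - y" using y0 by simp
  have "(1 - y) ^ K = exp (real K * ln (1 - y))"
    using pos by (simp add: exp_of_nat_mult)
  also have "\<dots> \<ge> exp (T * ln (1 - y))"
    using KT lyneg by (intro exp_mono) (simp add: mult_right_mono_neg)
  finally have 1: "exp (T * ln (1 - y)) \<le> (1 - y) ^ K" .
  have "T * ln (1 - y) \<ge> T * (-2 * y)" using T0 ly by (intro mult_left_mono) auto
  also have "T * (-2 * y) = - ln r / (2 * ln 2)"
    using r4 by (simp add: T_def y_def log_def field_simps)
  also have "- ln r / (2 * ln 2) \<ge> -(3/4) * ln r"
  proof -
    have l2: "2/3 \<le> ln (2::real)" by (rule ln2_ge_two_thirds)
    have lr: "0 \<le> ln r" using r4 by simp
    have "ln r / (2 * ln 2) \<le> (3/4) * ln r"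
    proof -
      have "ln r / (2 * ln 2) \<le> ln r / (4/3)"
        by (rule divide_left_mono) (use l2 lr in auto)
      then show ?thesis by simp
    qed
    then show ?thesis by simp
  qed
  finally have 2: "-(3/4) * ln r \<le> T * ln (1 - y)" .
  have "r powr (-3/4) = exp (-(3/4) * ln r)" using r4 by (simp add: powr_def)
  also have "\<dots> \<le> exp (T * ln (1 - y))" using 2 by simp
  also have "\<dots> \<le> (1 - y) ^ K" by (rule 1)
  finally show ?thesis by (simp add: r_def y_def K_def T_def)
qed

lemma pw: fixes n :: nat assumes n: "4 \<le> n"
  shows "(1 - (1 - 2 / real n) ^ nat \<lfloor>real n * log 2 (real n) / 8\<rfloor>) ^ (n div 2)
          \<le> exp (-(real n / 4) * real n powr (-3/4))"
proof -
  define x where "x = (1 - 2 / real n) ^ nat \<lfloor>real n * log 2 (real n) / 8\<rfloor>"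
  have xl: "real n powr (-3/4) \<le> x" using pw_x[OF n] by (simp add: x_def)
  have x0: "0 \<le> x" "x \<le> 1" using n by (auto simp: x_def power_le_one)
  have "(1 - x) ^ (n div 2) \<le> exp (-x) ^ (n div 2)"
    using x0 by (intro power_mono) (use exp_ge_add_one_self[of "-x"] in auto)
  also have "\<dots> = exp (- (real (n div 2) * x))" by (simp add: exp_of_nat_mult[symmetric])
  also have "\<dots> \<le> exp (-(real n / 4) * x)"
  proof -
    have "real n / 4 \<le> real (n div 2)" using n by linarith
    from mult_right_mono[OF this x0(1)] show ?thesis by (intro exp_mono) linarith
  qed
  also have "\<dots> \<le> exp (-(real n / 4) * real n powr (-3/4))"
    using mult_left_mono[OF xl, of "real n"] by (intro exp_mono) simp
  finally show ?thesis by (simp add: x_def)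
qed

lemma asym: "\<forall>\<epsilon>>0. \<exists>N. \<forall>n\<ge>N. 4 \<le> n \<longrightarrow>
   (1 - (1 - 2 / real n) ^ nat \<lfloor>real n * log 2 (real n) / 8\<rfloor>) ^ (n div 2) \<le> \<epsilon>"
proof (intro allI impI)
  fix \<epsilon> :: real assume e: "\<epsilon> > 0"
  have lim: "((\<lambda>x::real. exp (-(x / 4) * x powr (-3/4))) \<longlongrightarrow> 0) at_top" by real_asymp
  have "((\<lambda>n::nat. exp (-(real n / 4) * real n powr (-3/4))) \<longlongrightarrow> 0) sequentially"
    by (rule filterlim_compose[OF lim filterlim_real_sequentially])
  from order_tendstoD(2)[OF this e] obtain N where
    N: "\<And>n. n \<ge> N \<Longrightarrow> exp (-(real n / 4) * real n powr (-3/4)) < \<epsilon>"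
    by (auto simp: eventually_sequentially)
  show "\<exists>N. \<forall>n\<ge>N. 4 \<le> n \<longrightarrow>
   (1 - (1 - 2 / real n) ^ nat \<lfloor>real n * log 2 (real n) / 8\<rfloor>) ^ (n div 2) \<le> \<epsilon>"
    using N pw by (meson less_imp_le order_trans)
qed


theorem mainTheorem8:
  fixes dummy :: "'a itself"
  shows "\<forall>\<epsilon>>0. \<exists>N. \<forall>n\<ge>N. \<forall>(V1::'a set) V2 v c.
     even n \<and> n \<ge> 4 \<and> finite V1 \<and> finite V2 \<and>
     card V1 = n div 2 \<and> card V2 = n div 2 - 1 \<and>
     V1 \<inter> V2 = {} \<and> v \<notin> V1 \<and> v \<notin> V2 \<and> colored c \<longrightarrow>
     conv_time_exceeds_prob (V1 \<union> V2 \<union> {v}) {(x, y). x \<in> V1 \<and> y \<in> V2 \<union> {v}}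
        (\<lambda>x. if x = v then c else Uncolored) (real n * log 2 (real n) / 8) \<ge> 1 - \<epsilon>"
proof (intro allI impI)
  fix \<epsilon> :: real assume e: "\<epsilon> > 0"
  from asym e obtain N where N: "\<And>n. n \<ge> N \<Longrightarrow> 4 \<le> n \<Longrightarrow>
     (1 - (1 - 2 / real n) ^ nat \<lfloor>real n * log 2 (real n) / 8\<rfloor>) ^ (n div 2) \<le> \<epsilon>"
    by blast
  show "\<exists>N. \<forall>n\<ge>N. \<forall>(V1::'a set) V2 v c.
     even n \<and> n \<ge> 4 \<and> finite V1 \<and> finite V2 \<and>
     card V1 = n div 2 \<and> card V2 = n div 2 - 1 \<and>
     V1 \<inter> V2 = {} \<and> v \<notin> V1 \<and> v \<notin> V2 \<and> colored c \<longrightarrow>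
     conv_time_exceeds_prob (V1 \<union> V2 \<union> {v}) {(x, y). x \<in> V1 \<and> y \<in> V2 \<union> {v}}
        (\<lambda>x. if x = v then c else Uncolored) (real n * log 2 (real n) / 8) \<ge> 1 - \<epsilon>"
  proof (intro exI allI impI)
    fix n V1 V2 v c
    assume nN: "n \<ge> N" and H: "even n \<and> n \<ge> 4 \<and> finite V1 \<and> finite (V2::'a set) \<and>
     card V1 = n div 2 \<and> card V2 = n div 2 - 1 \<and>
     V1 \<inter> V2 = {} \<and> v \<notin> V1 \<and> v \<notin> V2 \<and> colored c"
    interpret R: rpg V1 V2 v using H by unfold_locales auto
    define s0 where "s0 = (\<lambda>x::'a. if x = v then c else Uncolored)"
    define T where "T = real n * log 2 (real n) / 8"
    define K where "K = nat \<lfloor>T\<rfloor>"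
    define P where "P = rp_traj R.VV R.EE s0 K"
    have I0: "R.Inv s0" using H by (auto simp: R.Inv_def s0_def)
    have U0: "R.U s0 = V1" using H by (auto simp: R.U_def s0_def)
    have qv: "R.q = 1 - 2 / real n"
    proof -
      from H obtain k where k: "n = 2 * k" by auto
      have "card V2 = k - 1" using H k by simp
      moreover have "k \<ge> 2" using H k by simp
      ultimately have "real (card V2) = real k - 1" by simp
      then show ?thesis using k \<open>k \<ge> 2\<close> by (simp add: R.q_def field_simps)
    qed
    define Ev where "Ev = {xs. \<forall>t < length xs. real t \<le> T \<longrightarrow> \<not> stable R.VV R.EE (xs ! t)}"
    have sub: "{xs. R.U (last xs) \<noteq> {}} \<inter> set_pmf P \<subseteq> Ev"
    proof
      fix xs assume xs: "xs \<in> {xs. R.U (last xs) \<noteq> {}} \<inter> set_pmf P"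
      from R.traj_supp[OF I0, of xs K] xs have
        "\<forall>t<length xs. R.Inv (xs ! t)" "\<forall>t<length xs. R.U (xs ! t) \<noteq> {}"
        by (auto simp: P_def)
      then show "xs \<in> Ev" unfolding Ev_def using R.stable_iff by blast
    qed
    have "measure_pmf.prob P {xs. R.U (last xs) = {}} = measure_pmf.prob (R.it K s0) {s. R.U s = {}}"
      by (simp add: P_def R.traj_last[symmetric] vimage_def)
    also have "\<dots> = (1 - R.q ^ K) ^ card V1"
    proof -
      have "ennreal (measure_pmf.prob (R.it K s0) {s. R.U s = {}}) = ennreal ((1 - R.q ^ K) ^ card V1)"
        using R.prob_it[OF I0, of K] U0 by (simp add: measure_pmf.emeasure_eq_measure)
      moreover have "0 \<le> (1 - R.q ^ K) ^ card V1" using R.q_bounds by (simp add: power_le_one)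
      ultimately show ?thesis by (simp add: ennreal_inj)
    qed
    finally have p1: "measure_pmf.prob P {xs. R.U (last xs) = {}} = (1 - R.q ^ K) ^ card V1" .
    have "measure_pmf.prob P {xs. R.U (last xs) \<noteq> {}} = 1 - measure_pmf.prob P {xs. R.U (last xs) = {}}"
    proof -
      have "{xs. R.U (last xs) \<noteq> {}} = UNIV - {xs. R.U (last xs) = {}}" by auto
      then show ?thesis using measure_pmf.prob_compl[of "{xs. R.U (last xs) = {}}" P] by simp
    qed
    also have "measure_pmf.prob P {xs. R.U (last xs) \<noteq> {}} = measure_pmf.prob P ({xs. R.U (last xs) \<noteq> {}} \<inter> set_pmf P)"
      by (simp add: measure_Int_set_pmf)
    finally have p2: "measure_pmf.prob P ({xs. R.U (last xs) \<noteq> {}} \<inter> set_pmf P) = 1 - (1 - R.q ^ K) ^ card V1"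
      using p1 by simp
    have "measure_pmf.prob P ({xs. R.U (last xs) \<noteq> {}} \<inter> set_pmf P) \<le> measure_pmf.prob P Ev"
      using sub by (intro measure_pmf.finite_measure_mono) auto
    moreover have "(1 - R.q ^ K) ^ card V1 \<le> \<epsilon>"
      using N[OF nN] H qv by (simp add: K_def T_def)
    ultimately have "1 - \<epsilon> \<le> measure_pmf.prob P Ev" using p2 by linarith
    then show "conv_time_exceeds_prob (V1 \<union> V2 \<union> {v}) {(x, y). x \<in> V1 \<and> y \<in> V2 \<union> {v}}
        (\<lambda>x. if x = v then c else Uncolored) (real n * log 2 (real n) / 8) \<ge> 1 - \<epsilon>"
      by (simp add: conv_time_exceeds_prob_def P_def Ev_def K_def T_def s0_def)
  qed
qed

end
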